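(* Let receiver $1$ belong to session $h$, and suppose session $h$'s packets are delivered by a static channel allocation or by a genie-aided dynamic channel allocation without merging, so that receiver 1 can successfully receive at most one packet of session $h$ per time slot. Then the decay rate of its delay violation probability satisfies $$\limsup_{k\to\infty}\Big(-\frac1k\log\mathbb{P}(D_1\ge k)\Big)\le\sup\Big\{\theta>0:\log\mathbb{E}\big[e^{\theta a_h[t]}\big]<\theta\Big\}.$$ In particular this upper bound depends only on the distribution of $a_h[t]$ and not on the number of channels $m$, and it is finite whenever $\mathbb{P}(a_h[t]>1)>0$.
   Context: Time is slotted. Packets of session $h$ arrive at the transmitter in amounts $a_h[t]\in\{0,1,2,\dots\}$ per slot, i.i.d. across slots with mean $\lambda<1$. A packet of session $h$ is considered decoded by receiver 1 only when it and all packets of session $h$ with smaller index have been decoded; the delay of a packet is the number of slots from its arrival until it is decoded. $\mathbb{P}(D_1\ge k)$ denotes the almost-sure long-run fraction, among all arriving packets of session $h$, of those whose delay at receiver 1 is at least $k$. In a static channel allocation each session is served on a fixed channel; in the genie-aided dynamic allocation channels may be reassigned among sessions each slot using full channel knowledge, but (without merging of sessions) each receiver still receives at most one packet of its session per slot. *)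

theory Defs
  imports "HOL-Probability.Probability"
begin

text \<open>Arrivals of session h: a t w = number of packets arriving in slot t.
  Packets are indexed 0,1,2,... in order of arrival.\<close>

definition cum_arr :: "(nat \<Rightarrow> 'w \<Rightarrow> nat) \<Rightarrow> nat \<Rightarrow> 'w \<Rightarrow> nat" where
  "cum_arr a t w = (\<Sum>s<t. a s w)"

definition arr_slot :: "(nat \<Rightarrow> 'w \<Rightarrow> nat) \<Rightarrow> nat \<Rightarrow> 'w \<Rightarrow> nat" where
  "arr_slot a n w = (LEAST t. n < cum_arr a (Suc t) w)"

text \<open>r t w = Some j : receiver 1 successfully receives packet j of session h
  in slot t (at most one packet per slot); None : nothing received.\<close>
definition decoded_by :: "(nat \<Rightarrow> 'w \<Rightarrow> nat option) \<Rightarrow> nat \<Rightarrow> nat \<Rightarrow> 'w \<Rightarrow> bool" where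
  "decoded_by r n t w = (\<forall>j\<le>n. \<exists>s\<le>t. r s w = Some j)"

definition delay_ge :: "(nat \<Rightarrow> 'w \<Rightarrow> nat) \<Rightarrow> (nat \<Rightarrow> 'w \<Rightarrow> nat option) \<Rightarrow> nat \<Rightarrow> nat \<Rightarrow> 'w \<Rightarrow> bool" where
  "delay_ge a r k n w = (\<forall>t. t < arr_slot a n w + k \<longrightarrow> \<not> decoded_by r n t w)"

definition ereal_ln :: "ennreal \<Rightarrow> ereal" where
  "ereal_ln x = (if x = \<infinity> then \<infinity> else if x = 0 then -\<infinity> else ereal (ln (enn2real x)))"

definition decay :: "real \<Rightarrow> nat \<Rightarrow> ereal" where
  "decay p k = (if p \<le> 0 then \<infinity> else ereal (- ln p / real k))"

end

theory Submission
  imports Defs "HOL-Real_Asymp.Real_Asymp"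
begin


fun fpath :: "int \<Rightarrow> int \<Rightarrow> nat list \<Rightarrow> bool" where
  "fpath k s [] = False"
| "fpath k s (v # xs) = (if k \<le> s + int v - 1 then xs = [] else fpath k (s + int v - 1) xs)"

definition FP :: "nat \<Rightarrow> int \<Rightarrow> nat \<Rightarrow> int \<Rightarrow> nat list set" where
  "FP B k n s = {xs. set xs \<subseteq> {..B} \<and> length xs \<le> n \<and> fpath k s xs}"

fun Pw :: "(nat \<Rightarrow> real) \<Rightarrow> nat \<Rightarrow> int \<Rightarrow> nat \<Rightarrow> int \<Rightarrow> real" where
  "Pw mu B k 0 s = 0"
| "Pw mu B k (Suc n) s = (\<Sum>v\<le>B. mu v * (if k \<le> s + int v - 1 then 1 else Pw mu B k n (s + int v - 1)))"

fun Uw :: "(nat \<Rightarrow> real) \<Rightarrow> nat \<Rightarrow> int \<Rightarrow> real \<Rightarrow> nat \<Rightarrow> int \<Rightarrow> real" where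
  "Uw mu B k th 0 s = exp (th * s)"
| "Uw mu B k th (Suc n) s = (\<Sum>v\<le>B. mu v * (if k \<le> s + int v - 1 then 0 else Uw mu B k th n (s + int v - 1)))"

lemma fpath_sum: "fpath k s xs \<Longrightarrow> k \<le> s + int (sum_list xs) - int (length xs)"
proof (induction xs arbitrary: s)
  case (Cons v xs)
  show ?case
  proof (cases "k \<le> s + int v - 1")
    case True then show ?thesis using Cons.prems by auto
  next
    case False
    then have "fpath k (s + int v - 1) xs" using Cons.prems by auto
    from Cons.IH[OF this] show ?thesis by simp
  qed
qed simp

lemma fpath_prefix: "fpath k s xs \<Longrightarrow> fpath k s (xs @ r) \<Longrightarrow> r = []"
  by (induction xs arbitrary: s) (auto split: if_splits)

lemma finite_FP: "finite (FP B k n s)"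
proof -
  have "FP B k n s \<subseteq> {xs. set xs \<subseteq> {..B} \<and> length xs \<le> n}" by (auto simp: FP_def)
  moreover have "finite {xs. set xs \<subseteq> {..B} \<and> length xs \<le> n}"
    by (rule finite_lists_length_le) auto
  ultimately show ?thesis by (rule finite_subset)
qed

lemma FP_0: "FP B k 0 s = {}"
  by (auto simp: FP_def)

lemma FP_Suc: "FP B k (Suc n) s =
   (\<Union>v\<in>{..B}. (\<lambda>xs. v # xs) ` (if k \<le> s + int v - 1 then {[]} else FP B k n (s + int v - 1)))"
  (is "?L = ?R")
proof
  show "?L \<subseteq> ?R"
  proof
    fix xs assume "xs \<in> ?L"
    then obtain v ys where xs: "xs = v # ys" and h: "set xs \<subseteq> {..B}" "length xs \<le> Suc n" "fpath k s xs"
      by (cases xs) (auto simp: FP_def)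
    then show "xs \<in> ?R" by (auto simp: FP_def split: if_splits)
  qed
next
  show "?R \<subseteq> ?L" by (auto simp: FP_def split: if_splits)
qed

lemma Pw_FP: "Pw mu B k n s = (\<Sum>xs\<in>FP B k n s. prod_list (map mu xs))"
proof (induction n arbitrary: s)
  case 0 then show ?case by (simp add: FP_0)
next
  case (Suc n)
  let ?S = "\<lambda>v. (if k \<le> s + int v - 1 then {[]} else FP B k n (s + int v - 1))"
  have "(\<Sum>xs\<in>FP B k (Suc n) s. prod_list (map mu xs)) =
        (\<Sum>v\<le>B. \<Sum>xs\<in>(\<lambda>xs. v # xs) ` ?S v. prod_list (map mu xs))"
    unfolding FP_Suc
    by (rule sum.UNION_disjoint) (auto simp: finite_FP)
  also have "\<dots> = (\<Sum>v\<le>B. \<Sum>xs\<in>?S v. mu v * prod_list (map mu xs))"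
    by (rule sum.cong[OF refl], subst sum.reindex) (auto simp: inj_on_def)
  also have "\<dots> = (\<Sum>v\<le>B. mu v * (if k \<le> s + int v - 1 then 1 else Pw mu B k n (s + int v - 1)))"
    by (rule sum.cong[OF refl]) (auto simp: sum_distrib_left[symmetric] Suc.IH)
  finally show ?case by simp
qed

lemma A1:
  assumes mu: "\<And>v. 0 \<le> mu v" and th: "0 \<le> th"
    and phi: "1 \<le> (\<Sum>v\<le>B. mu v * exp (th * (real v - 1)))"
    and "s < k"
  shows "exp (th * s) \<le> exp (th * real_of_int (k + int B)) * Pw mu B k n s + Uw mu B k th n s"
  using assms(4)
proof (induction n arbitrary: s)
  case 0 then show ?case by simp
next
  case (Suc n)
  have "exp (th * s) \<le> exp (th * s) * (\<Sum>v\<le>B. mu v * exp (th * (real v - 1)))"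
    using phi by simp
  also have "\<dots> = (\<Sum>v\<le>B. mu v * exp (th * (s + int v - 1)))"
    by (simp add: sum_distrib_left algebra_simps flip: exp_add)
  also have "\<dots> \<le> (\<Sum>v\<le>B. mu v * (if k \<le> s + int v - 1 then exp (th * (k + B))
        else exp (th * (k + B)) * Pw mu B k n (s + int v - 1) + Uw mu B k th n (s + int v - 1)))"
  proof (rule sum_mono)
    fix v assume v: "v \<in> {..B}"
    show "mu v * exp (th * (s + int v - 1)) \<le> mu v * (if k \<le> s + int v - 1 then exp (th * (k + B))
        else exp (th * (k + B)) * Pw mu B k n (s + int v - 1) + Uw mu B k th n (s + int v - 1))"
    proof (cases "k \<le> s + int v - 1")
      case True
      have "s + int v - 1 \<le> k + B" using v Suc.prems by auto
      then have "real_of_int (s + int v - 1) \<le> real_of_int (k + int B)"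
        by (metis of_int_le_iff)
      then have "th * real_of_int (s + int v - 1) \<le> th * real_of_int (k + int B)"
        using th by (rule mult_left_mono)
      then show ?thesis using True mu[of v] by (auto intro!: mult_left_mono)
    next
      case False
      then show ?thesis using Suc.IH[of "s + int v - 1"] mu[of v] by (auto intro!: mult_left_mono)
    qed
  qed
  also have "\<dots> = exp (th * (k + B)) * Pw mu B k (Suc n) s + Uw mu B k th (Suc n) s"
    by (simp add: sum_distrib_left sum.distrib[symmetric] algebra_simps if_distrib cong: if_cong)
  finally show ?case .
qed

lemma A2:
  assumes mu: "\<And>v. 0 \<le> mu v" and th: "0 \<le> th'" "th' \<le> th"
    and "s < k"
  shows "Uw mu B k th n s \<le> exp ((th - th') * k) * exp (th' * s) * (\<Sum>v\<le>B. mu v * exp (th' * (real v - 1))) ^ n"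
  using assms(4)
proof (induction n arbitrary: s)
  case 0
  have "(th - th') * s \<le> (th - th') * k" using th 0 by (intro mult_left_mono) auto
  then have "th * s \<le> (th - th') * k + th' * s" by (simp add: algebra_simps)
  then show ?case by (simp flip: exp_add)
next
  case (Suc n)
  let ?C = "exp ((th - th') * k)" and ?p = "(\<Sum>v\<le>B. mu v * exp (th' * (real v - 1)))"
  have "Uw mu B k th (Suc n) s \<le> (\<Sum>v\<le>B. mu v * (?C * exp (th' * (s + int v - 1)) * ?p ^ n))"
    unfolding Uw.simps
  proof (rule sum_mono)
    fix v assume "v \<in> {..B}"
    have nn: "0 \<le> ?p" using mu by (intro sum_nonneg) auto
    show "mu v * (if k \<le> s + int v - 1 then 0 else Uw mu B k th n (s + int v - 1))
        \<le> mu v * (?C * exp (th' * (s + int v - 1)) * ?p ^ n)"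
      using Suc.IH[of "s + int v - 1"] mu[of v] nn
      by (auto intro!: mult_left_mono mult_nonneg_nonneg)
  qed
  also have "\<dots> = (\<Sum>v\<le>B. (?C * exp (th' * s) * ?p ^ n) * (mu v * exp (th' * (real v - 1))))"
  proof (rule sum.cong[OF refl])
    fix v
    have "exp (th' * real_of_int (s + int v - 1)) = exp (th' * s) * exp (th' * (real v - 1))"
      by (simp add: algebra_simps flip: exp_add)
    then show "mu v * (?C * exp (th' * real_of_int (s + int v - 1)) * ?p ^ n) = (?C * exp (th' * s) * ?p ^ n) * (mu v * exp (th' * (real v - 1)))"
      by simp
  qed
  also have "\<dots> = ?C * exp (th' * s) * ?p ^ Suc n"
    by (simp add: sum_distrib_left[symmetric])
  finally show ?case .
qed


lemma prod_list_nth: "prod_list (map (mu::nat\<Rightarrow>real) z) = (\<Prod>j<length z. mu (z ! j))"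
  by (induction z) (simp_all del: prod.lessThan_Suc add: prod.lessThan_Suc_shift)

locale arr = prob_space M for M :: "'w measure" +
  fixes a :: "nat \<Rightarrow> 'w \<Rightarrow> nat"
  assumes meas: "\<And>t. a t \<in> measurable M (count_space UNIV)"
    and indep: "indep_vars (\<lambda>_. count_space UNIV) a UNIV"
    and ident: "\<And>t. distr M (count_space UNIV) (a t) = distr M (count_space UNIV) (a 0)"
begin

definition mu :: "nat \<Rightarrow> real" where "mu v = prob {w \<in> space M. a 0 w = v}"

definition cyl :: "nat list \<Rightarrow> 'w set" where
  "cyl z = {w \<in> space M. \<forall>j<length z. a j w = z ! j}"

lemma mu_nonneg: "0 \<le> mu v" by (simp add: mu_def)

lemma prob_a: "prob (a t -` A \<inter> space M) = prob (a 0 -` A \<inter> space M)"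
proof -
  have "prob (a t -` A \<inter> space M) = measure (distr M (count_space UNIV) (a t)) A"
    by (rule measure_distr[symmetric]) (auto simp: meas)
  also have "\<dots> = measure (distr M (count_space UNIV) (a 0)) A" by (simp add: ident[of t])
  also have "\<dots> = prob (a 0 -` A \<inter> space M)"
    by (rule measure_distr) (auto simp: meas)
  finally show ?thesis .
qed

lemma prob_a_eq: "prob {w \<in> space M. a t w = v} = mu v"
proof -
  have "{w \<in> space M. a t w = v} = a t -` {v} \<inter> space M" by auto
  moreover have "{w \<in> space M. a 0 w = v} = a 0 -` {v} \<inter> space M" by auto
  ultimately show ?thesis using prob_a[of t "{v}"] by (simp add: mu_def)
qed

lemma meas'[measurable]: "a t \<in> measurable M (count_space UNIV)" by (rule meas)

lemma cyl_sets[measurable]: "cyl z \<in> sets M"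
  unfolding cyl_def by measurable

lemma prob_cyl: "prob (cyl z) = prod_list (map mu z)"
proof (cases "z = []")
  case True
  then show ?thesis by (simp add: cyl_def prob_space)
next
  case False
  have "cyl z = (\<Inter>j\<in>{..<length z}. a j -` {z ! j} \<inter> space M)"
    using False by (auto simp: cyl_def)
  moreover have "prob (\<Inter>j\<in>{..<length z}. a j -` {z ! j} \<inter> space M) = (\<Prod>j\<in>{..<length z}. prob (a j -` {z ! j} \<inter> space M))"
    by (rule indep_varsD[OF indep]) (use False in auto)
  ultimately have "prob (cyl z) = (\<Prod>j\<in>{..<length z}. prob (a j -` {z ! j} \<inter> space M))"
    by simp
  also have "\<dots> = (\<Prod>j\<in>{..<length z}. mu (z ! j))"
  proof (rule prod.cong[OF refl])
    fix j
    have "a j -` {z ! j} \<inter> space M = {w \<in> space M. a j w = z ! j}" by auto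
    then show "prob (a j -` {z ! j} \<inter> space M) = mu (z ! j)" by (simp add: prob_a_eq)
  qed
  finally show ?thesis by (simp add: prod_list_nth)
qed

lemma cyl_inter_take:
  assumes "w \<in> cyl z" "w \<in> cyl z'" "length z \<le> length z'"
  shows "take (length z) z' = z"
  using assms by (intro nth_equalityI) (auto simp: cyl_def)

lemma cum_arr_cyl:
  assumes "w \<in> cyl y"
  shows "cum_arr a (length y) w = sum_list y"
proof -
  have "cum_arr a (length y) w = (\<Sum>j<length y. y ! j)"
    using assms unfolding cum_arr_def cyl_def by (intro sum.cong) auto
  also have "\<dots> = sum_list y" by (simp add: sum_list_sum_nth atLeast0LessThan)
  finally show ?thesis .
qed

lemma cyl_append_disjoint:
  assumes "w \<in> cyl (y @ x)" "w \<in> cyl (y' @ x')" "length y = length y'"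
    and "fpath k s x" "fpath k s x'"
  shows "y = y' \<and> x = x'"
proof -
  have yy: "y = y'"
  proof (rule nth_equalityI)
    show "length y = length y'" by fact
    fix j assume "j < length y"
    then show "y ! j = y' ! j" using assms(1,2,3) unfolding cyl_def
      by (auto simp: nth_append) (metis nth_append trans_less_add1)
  qed
  have xx: "x = x'"
  proof (cases "length (y @ x) \<le> length (y' @ x')")
    case True
    then have "take (length (y @ x)) (y' @ x') = y @ x" using cyl_inter_take assms by blast
    then have "take (length x) x' = x" using yy by simp
    then have "x' = x @ drop (length x) x'" by (metis append_take_drop_id)
    then have "drop (length x) x' = []" using fpath_prefix[OF assms(4)] assms(5) by metis
    then show ?thesis using \<open>x' = x @ drop (length x) x'\<close> by simp
  next
    case False
    then have "take (length (y' @ x')) (y @ x) = y' @ x'" using cyl_inter_take assms by (meson nat_le_linear)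
    then have "take (length x') x = x'" using yy by simp
    then have "x = x' @ drop (length x') x" by (metis append_take_drop_id)
    then have "drop (length x') x = []" using fpath_prefix[OF assms(5)] assms(4) by metis
    then show ?thesis using \<open>x = x' @ drop (length x') x\<close> by simp
  qed
  from yy xx show ?thesis by simp
qed

lemma prob_union_cyl:
  assumes Y: "finite Y" "\<And>y. y \<in> Y \<Longrightarrow> length y = L0"
    and X: "finite X" "\<And>x. x \<in> X \<Longrightarrow> fpath k s x"
  shows "prob (\<Union>p\<in>Y \<times> X. cyl (fst p @ snd p)) =
     (\<Sum>y\<in>Y. prod_list (map mu y)) * (\<Sum>x\<in>X. prod_list (map mu x))"
proof -
  have "prob (\<Union>p\<in>Y \<times> X. cyl (fst p @ snd p)) = (\<Sum>p\<in>Y \<times> X. prob (cyl (fst p @ snd p)))"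
  proof (rule finite_measure_finite_Union)
    show "finite (Y \<times> X)" using Y X by simp
    show "(\<lambda>p. cyl (fst p @ snd p)) ` (Y \<times> X) \<subseteq> sets M" by auto
    show "disjoint_family_on (\<lambda>p. cyl (fst p @ snd p)) (Y \<times> X)"
      unfolding disjoint_family_on_def
    proof (intro ballI impI)
      fix p q assume h: "p \<in> Y \<times> X" "q \<in> Y \<times> X" "p \<noteq> q"
      show "cyl (fst p @ snd p) \<inter> cyl (fst q @ snd q) = {}"
      proof (rule ccontr)
        assume "cyl (fst p @ snd p) \<inter> cyl (fst q @ snd q) \<noteq> {}"
        then obtain w where "w \<in> cyl (fst p @ snd p)" "w \<in> cyl (fst q @ snd q)" by blast
        then have "fst p = fst q \<and> snd p = snd q"
          using cyl_append_disjoint[of w "fst p" "snd p" "fst q" "snd q" k s] Y X h by auto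
        then show False using h(3) by (simp add: prod_eq_iff)
      qed
    qed
  qed
  also have "\<dots> = (\<Sum>p\<in>Y \<times> X. prod_list (map mu (fst p)) * prod_list (map mu (snd p)))"
    by (simp add: prob_cyl)
  also have "\<dots> = (\<Sum>y\<in>Y. prod_list (map mu y)) * (\<Sum>x\<in>X. prod_list (map mu x))"
    by (simp add: sum_product sum.cartesian_product split_beta)
  finally show ?thesis .
qed

lemma prob_cum_le:
  "prob {w \<in> space M. cum_arr a L0 w \<le> c} =
     (\<Sum>y\<in>{y. set y \<subseteq> {..c} \<and> length y = L0 \<and> sum_list y \<le> c}. prod_list (map mu y))"
proof -
  let ?Y = "{y. set y \<subseteq> {..c} \<and> length y = L0 \<and> sum_list y \<le> c}"
  have fin: "finite ?Y"
    by (rule finite_subset[OF _ finite_lists_length_eq[of "{..c}" L0]]) auto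
  have eq: "{w \<in> space M. cum_arr a L0 w \<le> c} = (\<Union>y\<in>?Y. cyl y)"
  proof
    show "{w \<in> space M. cum_arr a L0 w \<le> c} \<subseteq> (\<Union>y\<in>?Y. cyl y)"
    proof
      fix w assume w: "w \<in> {w \<in> space M. cum_arr a L0 w \<le> c}"
      let ?y = "map (\<lambda>j. a j w) [0..<L0]"
      have wc: "w \<in> cyl ?y" using w by (auto simp: cyl_def)
      have "sum_list ?y \<le> c" using cum_arr_cyl[OF wc] w by simp
      moreover have "set ?y \<subseteq> {..c}"
      proof
        fix v assume "v \<in> set ?y"
        then have "v \<le> sum_list ?y" by (auto intro: member_le_sum_list)
        then show "v \<in> {..c}" using \<open>sum_list ?y \<le> c\<close> by simp
      qed
      ultimately have "?y \<in> ?Y" by simp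
      then show "w \<in> (\<Union>y\<in>?Y. cyl y)" using wc by blast
    qed
    show "(\<Union>y\<in>?Y. cyl y) \<subseteq> {w \<in> space M. cum_arr a L0 w \<le> c}"
      using cum_arr_cyl by (auto simp: cyl_def[of _] )
  qed
  have "prob (\<Union>y\<in>?Y. cyl y) = (\<Sum>y\<in>?Y. prob (cyl y))"
  proof (rule finite_measure_finite_Union[OF fin])
    show "cyl ` ?Y \<subseteq> sets M" by auto
    show "disjoint_family_on cyl ?Y"
      unfolding disjoint_family_on_def
    proof (intro ballI impI)
      fix y y' assume h: "y \<in> ?Y" "y' \<in> ?Y" "y \<noteq> y'"
      show "cyl y \<inter> cyl y' = {}"
      proof (rule ccontr)
        assume "cyl y \<inter> cyl y' \<noteq> {}"
        then obtain w where "w \<in> cyl y" "w \<in> cyl y'" by blast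
        then show False using cyl_inter_take[of w y y'] h by auto
      qed
    qed
  qed
  then show ?thesis using eq by (simp add: prob_cyl)
qed

end


context arr begin

lemma a_borel[measurable]: "a t \<in> borel_measurable M"
  using meas[of t] by (simp add: measurable_cong_sets[OF refl sets_borel_eq_count_space])
lemma cum_meas[measurable]: "(\<lambda>w. cum_arr a L0 w) \<in> measurable M (count_space UNIV)"
  unfolding cum_arr_def by measurable

lemma nn_int_a: "(\<integral>\<^sup>+ w. ennreal (real (a t w)) \<partial>M) = (\<integral>\<^sup>+ w. ennreal (real (a 0 w)) \<partial>M)"
proof -
  have "(\<integral>\<^sup>+ w. ennreal (real (a t w)) \<partial>M) = (\<integral>\<^sup>+ x. ennreal (real x) \<partial>distr M (count_space UNIV) (a t))"
    by (rule nn_integral_distr[symmetric]) auto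
  also have "\<dots> = (\<integral>\<^sup>+ x. ennreal (real x) \<partial>distr M (count_space UNIV) (a 0))"
    by (simp add: ident[of t])
  also have "\<dots> = (\<integral>\<^sup>+ w. ennreal (real (a 0 w)) \<partial>M)"
    by (rule nn_integral_distr) auto
  finally show ?thesis .
qed

lemma nn_int_cum: "(\<integral>\<^sup>+ w. ennreal (real (cum_arr a L0 w)) \<partial>M) = of_nat L0 * (\<integral>\<^sup>+ w. ennreal (real (a 0 w)) \<partial>M)"
proof -
  have "(\<integral>\<^sup>+ w. ennreal (real (cum_arr a L0 w)) \<partial>M) = (\<integral>\<^sup>+ w. (\<Sum>s<L0. ennreal (real (a s w))) \<partial>M)"
    by (intro nn_integral_cong) (simp add: cum_arr_def)
  also have "\<dots> = (\<Sum>s<L0. (\<integral>\<^sup>+ w. ennreal (real (a s w)) \<partial>M))"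
    by (rule nn_integral_sum) auto
  also have "\<dots> = (\<Sum>s<L0. (\<integral>\<^sup>+ w. ennreal (real (a 0 w)) \<partial>M))"
    by (rule sum.cong[OF refl]) (rule nn_int_a)
  also have "\<dots> = of_nat L0 * (\<integral>\<^sup>+ w. ennreal (real (a 0 w)) \<partial>M)"
    by simp
  finally show ?thesis .
qed

lemma markov_cum:
  assumes lam: "(\<integral>\<^sup>+ w. ennreal (real (a 0 w)) \<partial>M) = ennreal lam" "0 \<le> lam"
  shows "1 - real L0 * lam / (real c + 1) \<le> prob {w \<in> space M. cum_arr a L0 w \<le> c}"
proof -
  let ?A = "{w \<in> space M. c < cum_arr a L0 w}"
  have Am: "?A \<in> sets M" by measurable
  have "ennreal (real c + 1) * emeasure M ?A = (\<integral>\<^sup>+ w. ennreal (real c + 1) * indicator ?A w \<partial>M)"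
    using Am by (simp add: nn_integral_cmult_indicator)
  also have "\<dots> \<le> (\<integral>\<^sup>+ w. ennreal (real (cum_arr a L0 w)) \<partial>M)"
  proof (intro nn_integral_mono)
    fix w
    show "ennreal (real c + 1) * indicator ?A w \<le> ennreal (real (cum_arr a L0 w))"
    proof (cases "w \<in> ?A")
      case True
      then have "real c + 1 \<le> real (cum_arr a L0 w)" by auto
      then have "ennreal (real c + 1) \<le> ennreal (real (cum_arr a L0 w))" by (rule ennreal_leI)
      then show ?thesis using True by (simp only: indicator_simps mult_1_right)
    next
      case False then show ?thesis by simp
    qed
  qed
  also have "\<dots> = ennreal (real L0 * lam)"
    using lam by (simp add: nn_int_cum ennreal_mult ennreal_of_nat_eq_real_of_nat)
  finally have "ennreal ((real c + 1) * prob ?A) \<le> ennreal (real L0 * lam)"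
    by (simp add: emeasure_eq_measure ennreal_mult)
  then have "(real c + 1) * prob ?A \<le> real L0 * lam"
    using lam by (subst (asm) ennreal_le_iff) auto
  then have pA: "prob ?A \<le> real L0 * lam / (real c + 1)"
    by (simp add: field_simps)
  have "{w \<in> space M. cum_arr a L0 w \<le> c} = space M - ?A" by auto
  then have "prob {w \<in> space M. cum_arr a L0 w \<le> c} = 1 - prob ?A"
    using Am by (simp add: prob_compl)
  then show ?thesis using pA by simp
qed

end


lemma cum_arr_add: "cum_arr a (u + m) w = cum_arr a u w + (\<Sum>i<m. a (u + i) w)"
  by (induction m) (simp_all add: cum_arr_def)

lemma cum_arr_mono: "s \<le> t \<Longrightarrow> cum_arr a s w \<le> cum_arr a t w"
  unfolding cum_arr_def by (rule sum_mono2) auto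

lemma delay_window:
  assumes causal: "\<And>t j. r t w = Some j \<Longrightarrow> j < cum_arr a (Suc t) w"
    and m: "1 \<le> m" and sc: "m + k \<le> (\<Sum>i<m. a (u + i) w)"
  shows "delay_ge a r k (cum_arr a (u + m) w - 1) w"
    and "cum_arr a u w \<le> cum_arr a (u + m) w - 1"
proof -
  let ?T = "cum_arr a (u + m) w" and ?q = "cum_arr a (u + m) w - 1" and ?c = "cum_arr a u w"
  have T: "?T = ?c + (\<Sum>i<m. a (u + i) w)" by (rule cum_arr_add)
  then have Tge: "?c + m + k \<le> ?T" using sc by simp
  then show "?c \<le> ?q" using m by simp
  have qT: "?q < ?T" using Tge m by simp
  have Suc_eq: "Suc (u + m - 1) = u + m" using m by simp
  have arr: "arr_slot a ?q w \<le> u + m - 1"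
    unfolding arr_slot_def by (rule Least_le) (metis Suc_eq qT)
  show "delay_ge a r k ?q w"
    unfolding delay_ge_def
  proof (intro allI impI notI)
    fix t assume t: "t < arr_slot a ?q w + k" and dec: "decoded_by r ?q t w"
    have tle: "t + 2 \<le> u + m + k" using t arr m by linarith
    let ?J = "{?c..<?T}"
    have ex: "\<exists>s. s \<le> t \<and> r s w = Some j" if "j \<in> ?J" for j
      using dec that qT unfolding decoded_by_def by (metis atLeastLessThan_iff less_Suc_eq_le Suc_pred' gr0I less_nat_zero_code)
    define f where "f j = (SOME s. s \<le> t \<and> r s w = Some j)" for j
    have f: "f j \<le> t \<and> r (f j) w = Some j" if "j \<in> ?J" for j
      using someI_ex[OF ex[OF that]] unfolding f_def .
    have inj: "inj_on f ?J"
    proof (rule inj_onI)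
      fix i j assume "i \<in> ?J" "j \<in> ?J" "f i = f j"
      then show "i = j" using f by (metis option.inject)
    qed
    have img: "f ` ?J \<subseteq> {u..t}"
    proof
      fix s assume "s \<in> f ` ?J"
      then obtain j where j: "j \<in> ?J" "s = f j" by auto
      have "j < cum_arr a (Suc s) w" using causal f[OF j(1)] j(2) by auto
      moreover have "?c \<le> j" using j by simp
      ultimately have "\<not> Suc s \<le> u" using cum_arr_mono[of "Suc s" u a w] by linarith
      then show "s \<in> {u..t}" using f[OF j(1)] j(2) by auto
    qed
    have "card ?J \<le> card {u..t}" by (rule card_inj_on_le[OF inj img]) simp
    moreover have "card ?J = ?T - ?c" by simp
    moreover have "card {u..t} = Suc t - u" by simp
    ultimately show False using Tge tle m by linarith
  qed
qed

lemma count_windows: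
  assumes causal: "\<And>t j. r t w = Some j \<Longrightarrow> j < cum_arr a (Suc t) w"
    and Ls: "Ls \<subseteq> {..<L}"
    and win: "\<And>l. l \<in> Ls \<Longrightarrow> \<exists>m. 1 \<le> m \<and> m \<le> n \<and> m + k \<le> (\<Sum>i<m. a (l * n + i) w) \<and> cum_arr a (l * n + m) w \<le> N"
  shows "card Ls \<le> card {q. q < N \<and> delay_ge a r k q w}"
proof -
  from win obtain mm where mm: "\<And>l. l \<in> Ls \<Longrightarrow> 1 \<le> mm l \<and> mm l \<le> n \<and> mm l + k \<le> (\<Sum>i<mm l. a (l * n + i) w) \<and> cum_arr a (l * n + mm l) w \<le> N"
    by metis
  define g where "g l = cum_arr a (l * n + mm l) w - 1" for l
  have g1: "delay_ge a r k (g l) w" "cum_arr a (l * n) w \<le> g l" if "l \<in> Ls" for l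
    using delay_window[OF causal, where m="mm l" and k=k and u="l * n"] mm[OF that] unfolding g_def by auto
  have g2: "g l < cum_arr a (l * n + n) w" "g l < N" if "l \<in> Ls" for l
  proof -
    have "cum_arr a (l * n) w \<le> g l" by (rule g1(2)[OF that])
    have pos: "0 < cum_arr a (l * n + mm l) w"
      using cum_arr_add[of a "l * n" "mm l" w] mm[OF that] by linarith
    then have "g l < cum_arr a (l * n + mm l) w" unfolding g_def by simp
    moreover have "cum_arr a (l * n + mm l) w \<le> cum_arr a (l * n + n) w"
      using mm[OF that] by (intro cum_arr_mono) simp
    ultimately show "g l < cum_arr a (l * n + n) w" by simp
    show "g l < N" using mm[OF that] pos unfolding g_def by linarith
  qed
  have inj: "inj_on g Ls"
  proof (rule linorder_inj_onI')
    fix i j assume ij: "i \<in> Ls" "j \<in> Ls" "i < j"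
    have "g i < cum_arr a (i * n + n) w" by (rule g2(1)[OF ij(1)])
    also have "\<dots> \<le> cum_arr a (j * n) w"
    proof (rule cum_arr_mono)
      have "Suc i \<le> j" using ij by simp
      then have "Suc i * n \<le> j * n" by (rule mult_right_mono) simp
      then show "i * n + n \<le> j * n" by simp
    qed
    also have "\<dots> \<le> g j" by (rule g1(2)[OF ij(2)])
    finally show "g i \<noteq> g j" by simp
  qed
  have "g ` Ls \<subseteq> {q. q < N \<and> delay_ge a r k q w}" using g1 g2 by auto
  from card_inj_on_le[OF inj this] show ?thesis by simp
qed


lemma (in prob_space) fatou_lower:
  fixes g :: "nat \<Rightarrow> 'a \<Rightarrow> real" and fr :: "nat \<Rightarrow> 'a \<Rightarrow> real"
  assumes gm: "\<And>N. g N \<in> borel_measurable M"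
    and g01: "\<And>N w. 0 \<le> g N w" "\<And>N w. g N w \<le> 1"
    and gfr: "\<And>N w. w \<in> space M \<Longrightarrow> g N w \<le> fr N w"
    and lim: "AE w in M. (\<lambda>N. fr N w) \<longlonglongrightarrow> pk"
    and ev: "eventually (\<lambda>N. ennreal \<beta> \<le> (\<integral>\<^sup>+ w. ennreal (g N w) \<partial>M)) sequentially"
  shows "\<beta> \<le> pk"
proof -
  define f where "f N w = ennreal (1 - g N w)" for N w
  have fm: "f N \<in> borel_measurable M" for N unfolding f_def using gm by measurable
  have sum1: "(\<integral>\<^sup>+ w. f N w \<partial>M) + (\<integral>\<^sup>+ w. ennreal (g N w) \<partial>M) = 1" for N
  proof -
    have "(\<integral>\<^sup>+ w. f N w \<partial>M) + (\<integral>\<^sup>+ w. ennreal (g N w) \<partial>M) = (\<integral>\<^sup>+ w. f N w + ennreal (g N w) \<partial>M)"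
      by (rule nn_integral_add[symmetric]) (use fm gm in auto)
    also have "\<dots> = (\<integral>\<^sup>+ w. 1 \<partial>M)"
      by (intro nn_integral_cong) (simp add: f_def g01 ennreal_plus[symmetric] del: ennreal_plus)
    also have "\<dots> = 1" by (simp add: emeasure_space_1)
    finally show ?thesis .
  qed
  have ev2: "eventually (\<lambda>N. (\<integral>\<^sup>+ w. f N w \<partial>M) \<le> ennreal (1 - \<beta>) \<and> \<beta> \<le> 1) sequentially"
    using ev
  proof (rule eventually_mono)
    fix N assume b: "ennreal \<beta> \<le> (\<integral>\<^sup>+ w. ennreal (g N w) \<partial>M)"
    let ?x = "(\<integral>\<^sup>+ w. f N w \<partial>M)" and ?y = "(\<integral>\<^sup>+ w. ennreal (g N w) \<partial>M)"
    have xy: "?x + ?y = 1" by (rule sum1)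
    have "?x \<le> ?x + ?y" by simp
    then have "?x \<le> 1" using xy by simp
    then have xfin: "?x < \<top>" using ennreal_one_less_top by (rule le_less_trans)
    have "?y \<le> ?x + ?y" by simp
    then have "?y \<le> 1" using xy by simp
    then have yfin: "?y < \<top>" using ennreal_one_less_top by (rule le_less_trans)
    have "enn2real (?x + ?y) = enn2real ?x + enn2real ?y"
      using xfin yfin by (rule enn2real_plus)
    then have "enn2real ?x + enn2real ?y = 1" using xy by simp
    moreover have "\<beta> \<le> enn2real ?y"
    proof (cases "\<beta> \<le> 0")
      case True then show ?thesis using enn2real_nonneg[of ?y] by linarith
    next
      case False
      have "ennreal \<beta> \<le> ennreal (enn2real ?y)" using b yfin by simp
      then show ?thesis using False by (subst (asm) ennreal_le_iff) auto
    qed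
    ultimately have "enn2real ?x \<le> 1 - \<beta>" "\<beta> \<le> 1" using enn2real_nonneg[of ?x] by linarith+
    then show "?x \<le> ennreal (1 - \<beta>) \<and> \<beta> \<le> 1"
      using xfin ennreal_leI[of "enn2real ?x" "1 - \<beta>"] by simp
  qed
  then obtain N0 :: nat where N0: "\<And>N. N \<ge> N0 \<Longrightarrow> \<beta> \<le> 1" unfolding eventually_sequentially by blast
  have b1: "\<beta> \<le> 1" using N0[of N0] by simp
  have "(\<integral>\<^sup>+ w. liminf (\<lambda>N. f N w) \<partial>M) \<le> liminf (\<lambda>N. (\<integral>\<^sup>+ w. f N w \<partial>M))"
    by (rule nn_integral_liminf[OF fm])
  also have "\<dots> \<le> liminf (\<lambda>N. ennreal (1 - \<beta>))"
    by (rule Liminf_mono) (use ev2 in \<open>auto elim: eventually_mono\<close>)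
  also have "\<dots> = ennreal (1 - \<beta>)" by (simp add: Liminf_const)
  finally have up: "(\<integral>\<^sup>+ w. liminf (\<lambda>N. f N w) \<partial>M) \<le> ennreal (1 - \<beta>)" .
  have "AE w in M. ennreal (1 - pk) \<le> liminf (\<lambda>N. f N w)"
    using lim
  proof (rule AE_mp, intro AE_I2 impI)
    fix w assume w: "w \<in> space M" and l: "(\<lambda>N. fr N w) \<longlonglongrightarrow> pk"
    have "(\<lambda>N. ennreal (1 - fr N w)) \<longlonglongrightarrow> ennreal (1 - pk)"
      by (intro tendsto_ennrealI tendsto_diff tendsto_const l)
    then have "ennreal (1 - pk) = liminf (\<lambda>N. ennreal (1 - fr N w))"
      by (simp add: lim_imp_Liminf)
    also have "\<dots> \<le> liminf (\<lambda>N. f N w)"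
      unfolding f_def by (intro Liminf_mono always_eventually allI ennreal_leI) (use gfr[OF w] in auto)
    finally show "ennreal (1 - pk) \<le> liminf (\<lambda>N. f N w)" .
  qed
  then have "(\<integral>\<^sup>+ w. ennreal (1 - pk) \<partial>M) \<le> (\<integral>\<^sup>+ w. liminf (\<lambda>N. f N w) \<partial>M)"
    by (rule nn_integral_mono_AE)
  then have "ennreal (1 - pk) \<le> ennreal (1 - \<beta>)" using up by (simp add: emeasure_space_1)
  then have "1 - pk \<le> 1 - \<beta>" using b1 by (subst (asm) ennreal_le_iff) auto
  then show ?thesis by simp
qed


definition Ys :: "nat \<Rightarrow> nat \<Rightarrow> nat list set" where
  "Ys L0 c = {y. set y \<subseteq> {..c} \<and> length y = L0 \<and> sum_list y \<le> c}"

lemma finite_Ys: "finite (Ys L0 c)"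
  unfolding Ys_def by (rule finite_subset[OF _ finite_lists_length_eq[of "{..c}" L0]]) auto

lemma sum_list_le_B: "set x \<subseteq> {..B} \<Longrightarrow> sum_list x \<le> length x * B"
  by (induction x) auto

lemma arith_bound:
  fixes P0 lam :: real and q :: "nat \<Rightarrow> real"
  assumes n: "1 \<le> n" and N: "4 * n * (B + 1) \<le> N" and P0: "0 \<le> P0"
    and lam: "0 \<le> lam" "lam \<le> 1"
    and q: "\<And>l. l < N div (2 * n) \<Longrightarrow> (1 - real (l * n) * lam / (real (N - n * B) + 1)) * P0 \<le> q l"
  shows "P0 / (12 * real n) \<le> (\<Sum>l<N div (2 * n). q l) / real N"
proof -
  define L where "L = N div (2 * n)"
  have nB: "4 * (n * B) \<le> N" and n4: "4 * n \<le> N" using N by (simp_all add: algebra_simps)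
  have Npos: "0 < N" using n4 n by linarith
  have dm: "L * (2 * n) + N mod (2 * n) = N" unfolding L_def by (rule div_mult_mod_eq)
  have md: "N mod (2 * n) < 2 * n" using n by simp
  have L2: "2 * (L * n) \<le> N" using dm by (simp add: algebra_simps)
  have L3: "N < 2 * (L * n) + 2 * n" using dm md by (simp add: algebra_simps)
  have L4: "N \<le> 4 * (L * n)" using L3 n4 by linarith
  have cN: "3 * real N \<le> 4 * real (N - n * B) + 4"
  proof -
    have "real (N - n * B) = real N - real (n * B)" using nB by (simp add: of_nat_diff)
    moreover have "real (4 * (n * B)) \<le> real N" using nB by (simp only: of_nat_le_iff)
    then have "4 * real (n * B) \<le> real N" by simp
    ultimately show ?thesis by linarith
  qed
  have ql: "P0 / 3 \<le> q l" if l: "l < L" for l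
  proof -
    have "l * n \<le> L * n" using l by simp
    then have "2 * (l * n) \<le> N" using L2 by linarith
    then have "real (2 * (l * n)) \<le> real N" by (simp only: of_nat_le_iff)
    then have r2: "2 * real (l * n) \<le> real N" by simp
    have "real (l * n) * lam \<le> real (l * n) * 1" using lam by (intro mult_left_mono) auto
    then have "real (l * n) * lam \<le> real N / 2" using r2 by linarith
    also have "\<dots> \<le> 2 / 3 * (real (N - n * B) + 1)" using cN by (simp add: algebra_simps)
    finally have "real (l * n) * lam / (real (N - n * B) + 1) \<le> 2 / 3"
      by (simp add: divide_le_eq)
    then have "1 / 3 * P0 \<le> (1 - real (l * n) * lam / (real (N - n * B) + 1)) * P0"
      using P0 by (intro mult_right_mono) auto
    then show ?thesis using q[OF l[unfolded L_def]] by linarith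
  qed
  have S: "real L * (P0 / 3) \<le> (\<Sum>l<L. q l)"
    using sum_mono[of "{..<L}" "\<lambda>_. P0 / 3" q] ql by simp
  have "real N \<le> real (4 * (L * n))" using L4 by (simp only: of_nat_le_iff)
  then have L5: "real N \<le> 4 * (real L * real n)" by simp
  have nn: "0 \<le> P0 / (12 * real n)" using P0 n by simp
  have "P0 / (12 * real n) * real N \<le> P0 / (12 * real n) * (4 * (real L * real n))"
    by (rule mult_left_mono[OF L5 nn])
  also have "\<dots> = real L * (P0 / 3)" using n by (simp add: field_simps)
  finally have "P0 / (12 * real n) * real N \<le> real L * (P0 / 3)" .
  then have "P0 / (12 * real n) \<le> real L * (P0 / 3) / real N"
    using Npos by (simp add: pos_le_divide_eq)
  also have "\<dots> \<le> (\<Sum>l<L. q l) / real N"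
    using S Npos by (intro divide_right_mono) auto
  finally show ?thesis unfolding L_def .
qed


lemma sum_ind_card: "finite A \<Longrightarrow> (\<Sum>l\<in>A. indicator (S l) w :: real) = real (card {l\<in>A. w \<in> S l})"
  by (induction A rule: finite_induct) (auto simp: indicator_def insert_compr[symmetric] Collect_conj_eq card_insert_if)

context arr begin

definition G :: "nat \<Rightarrow> nat \<Rightarrow> nat \<Rightarrow> nat \<Rightarrow> nat \<Rightarrow> 'w set" where
  "G n B k N l = (\<Union>p\<in>Ys (l * n) (N - n * B) \<times> FP B (int k) n 0. cyl (fst p @ snd p))"

lemma G_sets[measurable]: "G n B k N l \<in> sets M"
  unfolding G_def using finite_Ys finite_FP by (intro sets.finite_UN) auto

lemma prob_G: "prob (G n B k N l) = prob {w \<in> space M. cum_arr a (l * n) w \<le> N - n * B} * Pw mu B (int k) n 0"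
proof -
  have "prob (G n B k N l) = (\<Sum>y\<in>Ys (l * n) (N - n * B). prod_list (map mu y)) * (\<Sum>x\<in>FP B (int k) n 0. prod_list (map mu x))"
    unfolding G_def
    by (rule prob_union_cyl[where k="int k" and s=0]) (use finite_Ys finite_FP in \<open>auto simp: Ys_def FP_def\<close>)
  then show ?thesis by (simp add: prob_cum_le Pw_FP Ys_def)
qed

lemma G_card:
  assumes causal: "\<And>t j. r t w = Some j \<Longrightarrow> j < cum_arr a (Suc t) w"
    and NB: "n * B \<le> N"
  shows "card {l \<in> {..<L}. w \<in> G n B k N l} \<le> card {q. q < N \<and> delay_ge a r k q w}"
proof (rule count_windows[OF causal, where n=n])
  show "{l \<in> {..<L}. w \<in> G n B k N l} \<subseteq> {..<L}" by auto
  fix l assume "l \<in> {l \<in> {..<L}. w \<in> G n B k N l}"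
  then obtain y x where y: "y \<in> Ys (l * n) (N - n * B)" and x: "x \<in> FP B (int k) n 0"
    and w: "w \<in> cyl (y @ x)"
    unfolding G_def by auto
  have fp: "fpath (int k) 0 x" and xB: "set x \<subseteq> {..B}" and xn: "length x \<le> n"
    using x by (auto simp: FP_def)
  have ly: "length y = l * n" and sy: "sum_list y \<le> N - n * B" using y by (auto simp: Ys_def)
  have m1: "1 \<le> length x" using fp by (cases x) auto
  have "int k \<le> 0 + int (sum_list x) - int (length x)" by (rule fpath_sum[OF fp])
  then have mk: "length x + k \<le> sum_list x" by linarith
  have ax: "a (l * n + i) w = x ! i" if "i < length x" for i
    using w that ly unfolding cyl_def by (auto simp: nth_append)
  have "(\<Sum>i<length x. a (l * n + i) w) = (\<Sum>i<length x. x ! i)"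
    by (rule sum.cong) (auto simp: ax)
  also have "\<dots> = sum_list x" by (simp add: sum_list_sum_nth atLeast0LessThan)
  finally have sx: "(\<Sum>i<length x. a (l * n + i) w) = sum_list x" .
  have "cum_arr a (length (y @ x)) w = sum_list (y @ x)" by (rule cum_arr_cyl[OF w])
  then have c: "cum_arr a (l * n + length x) w = sum_list y + sum_list x" using ly by simp
  have "sum_list x \<le> length x * B" by (rule sum_list_le_B[OF xB])
  also have "\<dots> \<le> n * B" using xn by simp
  finally have "cum_arr a (l * n + length x) w \<le> N" using c sy NB by linarith
  then show "\<exists>m\<ge>1. m \<le> n \<and> m + k \<le> (\<Sum>i<m. a (l * n + i) w) \<and> cum_arr a (l * n + m) w \<le> N"
    using m1 xn mk sx by (intro exI[of _ "length x"]) auto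
qed

definition gN :: "nat \<Rightarrow> nat \<Rightarrow> nat \<Rightarrow> nat \<Rightarrow> 'w \<Rightarrow> real" where
  "gN n B k N w = (if 4 * n * (B + 1) \<le> N then (\<Sum>l<N div (2 * n). indicator (G n B k N l) w) / real N else 0)"

lemma gN_meas: "gN n B k N \<in> borel_measurable M"
  unfolding gN_def by measurable

lemma gN_nonneg: "0 \<le> gN n B k N w"
  unfolding gN_def by (auto intro!: sum_nonneg divide_nonneg_nonneg)

lemma gN_le1: "gN n B k N w \<le> 1"
proof (cases "4 * n * (B + 1) \<le> N")
  case True
  have "(\<Sum>l<N div (2 * n). indicator (G n B k N l) w :: real) \<le> (\<Sum>l<N div (2 * n). 1)"
    by (intro sum_mono) (auto simp: indicator_def)
  also have "\<dots> = real (N div (2 * n))" by simp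
  also have "\<dots> \<le> real N" by simp
  finally have "(\<Sum>l<N div (2 * n). indicator (G n B k N l) w :: real) \<le> real N" .
  then show ?thesis using True by (auto simp: gN_def divide_le_eq_1)
next
  case False then show ?thesis by (simp add: gN_def)
qed

lemma P0_nonneg: "0 \<le> Pw mu B k n s"
  unfolding Pw_FP by (intro sum_nonneg prod_list_nonneg) (auto simp: mu_nonneg)

lemma gN_int:
  assumes lam: "(\<integral>\<^sup>+ w. ennreal (real (a 0 w)) \<partial>M) = ennreal lam" "0 \<le> lam" "lam \<le> 1"
    and n: "1 \<le> n" and N: "4 * n * (B + 1) \<le> N"
  shows "ennreal (Pw mu B (int k) n 0 / (12 * real n)) \<le> (\<integral>\<^sup>+ w. ennreal (gN n B k N w) \<partial>M)"
proof -
  let ?L = "N div (2 * n)"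
  let ?P0 = "Pw mu B (int k) n 0"
  have Npos: "0 < N" using N n by (metis add_gr_0 less_le_trans nat_0_less_mult_iff zero_less_numeral zero_less_one le_trans)
  have "(\<integral>\<^sup>+ w. ennreal (gN n B k N w) \<partial>M) = (\<integral>\<^sup>+ w. (\<Sum>l<?L. ennreal (1 / real N) * indicator (G n B k N l) w) \<partial>M)"
  proof (rule nn_integral_cong)
    fix w
    have "ennreal (gN n B k N w) = ennreal (\<Sum>l<?L. 1 / real N * indicator (G n B k N l) w)"
      using N by (simp add: gN_def sum_divide_distrib)
    also have "\<dots> = (\<Sum>l<?L. ennreal (1 / real N * indicator (G n B k N l) w))"
      by (rule sum_ennreal[symmetric]) auto
    also have "\<dots> = (\<Sum>l<?L. ennreal (1 / real N) * indicator (G n B k N l) w)"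
      by (intro sum.cong refl) (auto simp: indicator_def)
    finally show "ennreal (gN n B k N w) = (\<Sum>l<?L. ennreal (1 / real N) * indicator (G n B k N l) w)" .
  qed
  also have "\<dots> = (\<Sum>l<?L. (\<integral>\<^sup>+ w. ennreal (1 / real N) * indicator (G n B k N l) w \<partial>M))"
    by (rule nn_integral_sum) auto
  also have "\<dots> = (\<Sum>l<?L. ennreal (prob (G n B k N l) / real N))"
    by (intro sum.cong refl) (simp add: nn_integral_cmult_indicator emeasure_eq_measure ennreal_mult[symmetric])
  also have "\<dots> = ennreal (\<Sum>l<?L. prob (G n B k N l) / real N)"
    by (rule sum_ennreal) auto
  also have "(\<Sum>l<?L. prob (G n B k N l) / real N) = (\<Sum>l<?L. prob (G n B k N l)) / real N"
    by (simp add: sum_divide_distrib)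
  finally have eq: "(\<integral>\<^sup>+ w. ennreal (gN n B k N w) \<partial>M) = ennreal ((\<Sum>l<?L. prob (G n B k N l)) / real N)" .
  have "?P0 / (12 * real n) \<le> (\<Sum>l<?L. prob (G n B k N l)) / real N"
  proof (rule arith_bound[OF n N P0_nonneg lam(2,3)])
    fix l
    have "1 - real (l * n) * lam / (real (N - n * B) + 1) \<le> prob {w \<in> space M. cum_arr a (l * n) w \<le> N - n * B}"
      by (rule markov_cum[OF lam(1,2)])
    then show "(1 - real (l * n) * lam / (real (N - n * B) + 1)) * ?P0 \<le> prob (G n B k N l)"
      unfolding prob_G by (rule mult_right_mono) (rule P0_nonneg)
  qed
  then show ?thesis unfolding eq by (rule ennreal_leI)
qed

lemma p_lower:
  assumes causal: "\<And>t w j. w \<in> space M \<Longrightarrow> r t w = Some j \<Longrightarrow> j < cum_arr a (Suc t) w"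
    and fr: "AE w in M. (\<lambda>N. real (card {q. q < N \<and> delay_ge a r k q w}) / real N) \<longlonglongrightarrow> pk"
    and lam: "(\<integral>\<^sup>+ w. ennreal (real (a 0 w)) \<partial>M) = ennreal lam" "0 \<le> lam" "lam \<le> 1"
    and n: "1 \<le> n"
  shows "Pw mu B (int k) n 0 / (12 * real n) \<le> pk"
proof (rule fatou_lower[where g="\<lambda>N. gN n B k N"])
  show "gN n B k N \<in> borel_measurable M" for N by (rule gN_meas)
  show "0 \<le> gN n B k N w" "gN n B k N w \<le> 1" for N w by (rule gN_nonneg, rule gN_le1)
  show "AE w in M. (\<lambda>N. real (card {q. q < N \<and> delay_ge a r k q w}) / real N) \<longlonglongrightarrow> pk" by (rule fr)
  show "gN n B k N w \<le> real (card {q. q < N \<and> delay_ge a r k q w}) / real N" if w: "w \<in> space M" for N w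
  proof (cases "4 * n * (B + 1) \<le> N")
    case True
    have NB: "n * B \<le> N" using True by (simp add: algebra_simps)
    have "card {l \<in> {..<N div (2 * n)}. w \<in> G n B k N l} \<le> card {q. q < N \<and> delay_ge a r k q w}"
      by (rule G_card[OF causal[OF w] NB])
    then have "real (card {l \<in> {..<N div (2 * n)}. w \<in> G n B k N l}) / real N \<le> real (card {q. q < N \<and> delay_ge a r k q w}) / real N"
      by (intro divide_right_mono) auto
    then show ?thesis using True by (simp add: gN_def sum_ind_card)
  next
    case False then show ?thesis by (simp add: gN_def)
  qed
  show "eventually (\<lambda>N. ennreal (Pw mu B (int k) n 0 / (12 * real n)) \<le> (\<integral>\<^sup>+ w. ennreal (gN n B k N w) \<partial>M)) sequentially"
    unfolding eventually_sequentially using gN_int[OF lam n] by blast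
qed

end


lemma key_ineq:
  fixes th th1 y :: real
  assumes "0 < th1" "th1 < th"
  shows "exp (th1 * y) * (1 + (th - th1) * y) - (1 + (th - th1) / th1) * exp (th1 * y) + (th - th1) / th1 \<ge> 0"
proof -
  define E where "E = exp (th1 * y)"
  define c where "c = (th - th1) / th1"
  have E0: "0 < E" by (simp add: E_def)
  have "1 - th1 * y \<le> exp (- (th1 * y))" by (rule exp_minus_ge)
  then have "E * (1 - th1 * y) \<le> E * exp (- (th1 * y))" using E0 by (intro mult_left_mono) auto
  also have "\<dots> = 1" by (simp add: E_def flip: exp_add)
  finally have h: "E - 1 \<le> E * th1 * y" by (simp add: algebra_simps)
  have c0: "0 \<le> c" using assms by (simp add: c_def)
  have "c * (E - 1) \<le> c * (E * th1 * y)" using h c0 by (rule mult_left_mono)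
  also have "c * (E * th1 * y) = E * (th - th1) * y" using assms by (simp add: c_def field_simps)
  finally have "c * (E - 1) \<le> E * (th - th1) * y" .
  then show ?thesis unfolding E_def[symmetric] c_def[symmetric] by (simp add: algebra_simps)
qed

lemma key_ineq2:
  fixes th th1 y :: real
  assumes "0 < th1" "th1 < th"
  shows "exp (th * y) - (1 + (th - th1) / th1) * exp (th1 * y) + (th - th1) / th1 \<ge> 0"
    and "y = -1 \<Longrightarrow> exp (th * y) - (1 + (th - th1) / th1) * exp (th1 * y) + (th - th1) / th1 > 0"
proof -
  have eq: "exp (th * y) = exp (th1 * y) * exp ((th - th1) * y)"
    by (simp add: algebra_simps flip: exp_add)
  have "exp (th1 * y) * (1 + (th - th1) * y) \<le> exp (th1 * y) * exp ((th - th1) * y)"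
    by (intro mult_left_mono) (auto simp: exp_ge_add_one_self)
  then show "exp (th * y) - (1 + (th - th1) / th1) * exp (th1 * y) + (th - th1) / th1 \<ge> 0"
    using key_ineq[OF assms, of y] eq by linarith
  assume y: "y = -1"
  have "1 - (th - th1) < exp (- (th - th1))" using assms by (subst exp_minus_greater) auto
  then have "exp (th1 * y) * (1 + (th - th1) * y) < exp (th1 * y) * exp ((th - th1) * y)"
    using y by (intro mult_strict_left_mono) auto
  then show "exp (th * y) - (1 + (th - th1) / th1) * exp (th1 * y) + (th - th1) / th1 > 0"
    using key_ineq[OF assms, of y] eq by linarith
qed


lemma exp_quad:
  fixes y :: real
  assumes "\<bar>y\<bar> \<le> 1"
  shows "exp y \<le> 1 + y + y\<^sup>2"
proof (cases "0 \<le> y")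
  case True then show ?thesis using assms exp_bound[of y] by simp
next
  case False
  define t where "t = - y"
  have t: "0 < t" "t \<le> 1" using False assms by (auto simp: t_def)
  have "1 + t \<le> exp t" by (rule exp_ge_add_one_self)
  then have "exp (- t) \<le> 1 / (1 + t)" using t
    by (simp add: exp_minus divide_simps)
  also have "1 / (1 + t) \<le> 1 - t + t\<^sup>2"
  proof -
    have "1 \<le> (1 + t) * (1 - t + t\<^sup>2)" using t by (simp add: algebra_simps power2_eq_square power3_eq_cube)
    then show ?thesis using t by (simp add: divide_simps mult.commute)
  qed
  finally show ?thesis by (simp add: t_def)
qed

lemma theta_prime:
  fixes mu :: "nat \<Rightarrow> real"
  assumes mu: "\<And>v. 0 \<le> mu v" and B: "1 \<le> B" and th: "0 < th"
    and lr: "(\<Sum>v\<le>B. real v * mu v) < (\<Sum>v\<le>B. mu v)" and r1: "(\<Sum>v\<le>B. mu v) \<le> 1"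
  shows "\<exists>t. 0 < t \<and> t \<le> th \<and> (\<Sum>v\<le>B. mu v * exp (t * (real v - 1))) < 1"
proof -
  define rho where "rho = (\<Sum>v\<le>B. mu v)"
  define lb where "lb = (\<Sum>v\<le>B. real v * mu v)"
  define d where "d = rho - lb"
  have d: "0 < d" using lr by (simp add: d_def rho_def lb_def)
  have Bp: "0 < real B" using B by simp
  define t where "t = min th (min (1 / real B) (d / (2 * (real B)\<^sup>2)))"
  have t0: "0 < t" using th Bp d by (simp add: t_def)
  have "t \<le> 1 / real B" unfolding t_def by simp
  then have "t * real B \<le> 1 / real B * real B" using Bp by (intro mult_right_mono) auto
  then have tB: "t * real B \<le> 1" using Bp by simp
  have "t \<le> d / (2 * (real B)\<^sup>2)" unfolding t_def by simp
  then have "t * (2 * (real B)\<^sup>2) \<le> d / (2 * (real B)\<^sup>2) * (2 * (real B)\<^sup>2)" using Bp by (intro mult_right_mono) auto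
  then have td: "t * (2 * (real B)\<^sup>2) \<le> d" using Bp by simp
  have trm: "mu v * exp (t * (real v - 1)) \<le> mu v * (1 + t * (real v - 1) + t\<^sup>2 * (real B)\<^sup>2)" if v: "v \<le> B" for v
  proof -
    have av: "\<bar>real v - 1\<bar> \<le> real B" using v B by auto
    have "\<bar>t * (real v - 1)\<bar> \<le> t * real B" using av t0 by (simp add: abs_mult mult_left_mono)
    then have a1: "\<bar>t * (real v - 1)\<bar> \<le> 1" using tB by linarith
    have "(real v - 1)\<^sup>2 \<le> (real B)\<^sup>2" using av by (metis abs_le_square_iff abs_of_nat)
    then have "(t * (real v - 1))\<^sup>2 \<le> t\<^sup>2 * (real B)\<^sup>2" by (simp add: power_mult_distrib mult_left_mono)
    then have "exp (t * (real v - 1)) \<le> 1 + t * (real v - 1) + t\<^sup>2 * (real B)\<^sup>2"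
      using exp_quad[OF a1] by linarith
    then show ?thesis using mu[of v] by (rule mult_left_mono)
  qed
  have "(\<Sum>v\<le>B. mu v * exp (t * (real v - 1))) \<le> (\<Sum>v\<le>B. mu v * (1 + t * (real v - 1) + t\<^sup>2 * (real B)\<^sup>2))"
    using trm by (intro sum_mono) auto
  also have "\<dots> = rho + t * (lb - rho) + t\<^sup>2 * (real B)\<^sup>2 * rho"
    unfolding rho_def lb_def by (simp add: algebra_simps sum.distrib sum_distrib_left sum_distrib_right sum_subtractf)
  also have "\<dots> \<le> rho + t * (lb - rho) + t\<^sup>2 * (real B)\<^sup>2"
    using r1 by (simp add: rho_def mult_left_le)
  also have "t\<^sup>2 * (real B)\<^sup>2 \<le> t * d / 2"
  proof -
    have "t\<^sup>2 * (real B)\<^sup>2 = t * (t * (2 * (real B)\<^sup>2)) / 2" by (simp add: power2_eq_square)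
    also have "\<dots> \<le> t * d / 2" using td t0 by (simp add: mult_left_mono)
    finally show ?thesis .
  qed
  finally have "(\<Sum>v\<le>B. mu v * exp (t * (real v - 1))) \<le> rho - t * d / 2"
    by (simp add: d_def algebra_simps) argo
  also have "\<dots> < 1"
  proof -
    have "0 < t * d" using t0 d by simp
    then show ?thesis using r1 unfolding rho_def by argo
  qed
  finally show ?thesis using t0 by (intro exI[of _ t]) (simp add: t_def)
qed


context arr begin

lemma nn_int_series:
  assumes f: "\<And>v. 0 \<le> f v"
  shows "(\<integral>\<^sup>+ w. ennreal (f (a 0 w)) \<partial>M) = (\<Sum>v. ennreal (f v * mu v))"
proof -
  let ?A = "\<lambda>v. {w \<in> space M. a 0 w = v}"
  have A[measurable]: "?A v \<in> sets M" for v by measurable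
  have "(\<integral>\<^sup>+ w. ennreal (f (a 0 w)) \<partial>M) = (\<integral>\<^sup>+ w. (\<Sum>v. ennreal (f v) * indicator (?A v) w) \<partial>M)"
  proof (rule nn_integral_cong)
    fix w assume w: "w \<in> space M"
    have "(\<lambda>v. ennreal (f v) * indicator (?A v) w) = (\<lambda>v. if v = a 0 w then ennreal (f v) else 0)"
      using w by (auto simp: indicator_def)
    moreover have "(\<lambda>v. if v = a 0 w then ennreal (f v) else 0) sums ennreal (f (a 0 w))"
      by (rule sums_single)
    ultimately show "ennreal (f (a 0 w)) = (\<Sum>v. ennreal (f v) * indicator (?A v) w)"
      by (simp add: sums_iff)
  qed
  also have "\<dots> = (\<Sum>v. (\<integral>\<^sup>+ w. ennreal (f v) * indicator (?A v) w \<partial>M))"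
    by (rule nn_integral_suminf) measurable
  also have "\<dots> = (\<Sum>v. ennreal (f v * mu v))"
    by (intro suminf_cong) (simp add: nn_integral_cmult_indicator emeasure_eq_measure mu_def ennreal_mult f)
  finally show ?thesis .
qed

lemma mu_sums: "mu sums 1"
proof -
  have "(\<Sum>v. ennreal (1 * mu v)) = 1"
    using nn_int_series[of "\<lambda>_. 1"] by (simp add: emeasure_space_1)
  then have "(\<Sum>v. ennreal (mu v)) = ennreal 1" by simp
  moreover have "summable mu"
    using \<open>(\<Sum>v. ennreal (mu v)) = ennreal 1\<close> by (intro summable_suminf_not_top) (auto simp: mu_nonneg)
  moreover have "(\<Sum>v. ennreal (mu v)) = ennreal (suminf mu)"
    using \<open>summable mu\<close> by (intro suminf_ennreal2) (auto simp: mu_nonneg)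
  ultimately have "ennreal (suminf mu) = ennreal 1" by simp
  moreover have "0 \<le> suminf mu" using \<open>summable mu\<close> by (intro suminf_nonneg) (auto simp: mu_nonneg)
  ultimately have "suminf mu = 1" by (subst (asm) ennreal_inj) auto
  then show ?thesis using \<open>summable mu\<close> by (simp add: sums_iff)
qed

lemma mean_sums:
  assumes lam: "(\<integral>\<^sup>+ w. ennreal (real (a 0 w)) \<partial>M) = ennreal lam" "0 \<le> lam"
  shows "(\<lambda>v. real v * mu v) sums lam"
proof -
  have e: "(\<Sum>v. ennreal (real v * mu v)) = ennreal lam"
    using nn_int_series[of "\<lambda>v. real v"] lam by simp
  have s: "summable (\<lambda>v. real v * mu v)"
    using e by (intro summable_suminf_not_top) (auto simp: mu_nonneg)
  have "(\<Sum>v. ennreal (real v * mu v)) = ennreal (\<Sum>v. real v * mu v)"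
    by (rule suminf_ennreal2[OF _ s]) (simp add: mu_nonneg)
  then have "ennreal (\<Sum>v. real v * mu v) = ennreal lam" using e by simp
  moreover have "0 \<le> (\<Sum>v. real v * mu v)" using s by (intro suminf_nonneg) (auto simp: mu_nonneg)
  ultimately have "(\<Sum>v. real v * mu v) = lam"
    using lam(2) by (subst (asm) ennreal_inj) auto
  then show ?thesis using s by (simp add: sums_iff)
qed

lemma mu0_pos:
  assumes "(\<lambda>v. real v * mu v) sums lam" "lam < 1"
  shows "0 < mu 0"
proof (rule ccontr)
  assume "\<not> 0 < mu 0"
  then have m0: "mu 0 = 0" using mu_nonneg[of 0] by simp
  have "mu v \<le> real v * mu v" for v
    using m0 mu_nonneg[of v] by (cases v) (auto simp: mult_le_cancel_right1)
  then have "1 \<le> lam" by (rule sums_le[OF _ mu_sums assms(1)])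
  then show False using assms by simp
qed

lemma strict_growth:
  assumes mu0: "0 < mu 0" and th: "0 < th1" "th1 < th"
    and h1: "ennreal (exp th1) \<le> (\<Sum>v. ennreal (exp (th1 * real v) * mu v))"
  shows "ennreal (exp th) < (\<Sum>v. ennreal (exp (th * real v) * mu v))"
proof -
  let ?f1 = "\<lambda>v. exp (th1 * real v) * mu v" and ?f = "\<lambda>v. exp (th * real v) * mu v"
  have mono: "(\<Sum>v. ennreal (?f1 v)) \<le> (\<Sum>v. ennreal (?f v))"
    using th by (intro suminf_le ennreal_leI mult_right_mono) (auto simp: mu_nonneg intro!: mult_right_mono)
  show ?thesis
  proof (cases "(\<Sum>v. ennreal (?f1 v)) = \<top> \<or> (\<Sum>v. ennreal (?f v)) = \<top>")
    case True
    then have "(\<Sum>v. ennreal (?f v)) = \<top>" using mono by (auto simp: top_unique)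
    then show ?thesis by simp
  next
    case False
    have s1: "summable ?f1" using False by (intro summable_suminf_not_top) (auto simp: mu_nonneg)
    have s: "summable ?f" using False by (intro summable_suminf_not_top) (auto simp: mu_nonneg)
    have "(\<Sum>v. ennreal (?f1 v)) = ennreal (suminf ?f1)"
      by (rule suminf_ennreal2[OF _ s1]) (simp add: mu_nonneg)
    then have "ennreal (exp th1) \<le> ennreal (suminf ?f1)" using h1 by simp
    moreover have "0 \<le> suminf ?f1" using s1 by (intro suminf_nonneg) (auto simp: mu_nonneg)
    ultimately have "exp th1 \<le> suminf ?f1" by (subst (asm) ennreal_le_iff) auto
    then have S1: "1 \<le> exp (- th1) * suminf ?f1"
      by (simp add: exp_minus field_simps)
    define c where "c = (th - th1) / th1"
    define d where "d v = exp (- th) * ?f v - (1 + c) * (exp (- th1) * ?f1 v) + c * mu v" for v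
    have d_eq: "d v = mu v * (exp (th * (real v - 1)) - (1 + c) * exp (th1 * (real v - 1)) + c)" for v
    proof -
      have e1: "exp (th * (real v - 1)) = exp (- th) * exp (th * real v)"
        by (simp add: algebra_simps flip: exp_add)
      have e2: "exp (th1 * (real v - 1)) = exp (- th1) * exp (th1 * real v)"
        by (simp add: algebra_simps flip: exp_add)
      show ?thesis unfolding d_def e1 e2 by (simp add: algebra_simps)
    qed
    have dnn: "0 \<le> d v" for v
      unfolding d_eq c_def using key_ineq2(1)[OF th, of "real v - 1"] mu_nonneg[of v] by simp
    have d0: "0 < d 0"
      unfolding d_eq c_def using key_ineq2(2)[OF th, of "real 0 - 1"] mu0 by simp
    have sd: "summable d" unfolding d_def
      using s s1 mu_sums
      by (intro summable_add summable_diff summable_mult) (auto simp: sums_iff)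
    have sA: "summable (\<lambda>v. exp (- th) * ?f v)" by (rule summable_mult[OF s])
    have sB: "summable (\<lambda>v. (1 + c) * (exp (- th1) * ?f1 v))" by (intro summable_mult s1)
    have sC: "summable (\<lambda>v. c * mu v)" using mu_sums by (intro summable_mult) (simp add: sums_iff)
    have "suminf d = (\<Sum>v. exp (- th) * ?f v - (1 + c) * (exp (- th1) * ?f1 v)) + (\<Sum>v. c * mu v)"
      unfolding d_def by (rule suminf_add[symmetric]) (rule summable_diff[OF sA sB], rule sC)
    also have "(\<Sum>v. exp (- th) * ?f v - (1 + c) * (exp (- th1) * ?f1 v)) = (\<Sum>v. exp (- th) * ?f v) - (\<Sum>v. (1 + c) * (exp (- th1) * ?f1 v))"
      by (rule suminf_diff[symmetric, OF sA sB])
    also have "(\<Sum>v. exp (- th) * ?f v) = exp (- th) * suminf ?f" by (rule suminf_mult[OF s])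
    also have "(\<Sum>v. (1 + c) * (exp (- th1) * ?f1 v)) = (1 + c) * (\<Sum>v. exp (- th1) * ?f1 v)"
      by (rule suminf_mult) (rule summable_mult[OF s1])
    also have "(\<Sum>v. exp (- th1) * ?f1 v) = exp (- th1) * suminf ?f1" by (rule suminf_mult[OF s1])
    also have "(\<Sum>v. c * mu v) = c * suminf mu" using mu_sums by (intro suminf_mult) (simp add: sums_iff)
    also have "suminf mu = 1" using mu_sums by (simp add: sums_iff)
    finally have "0 < exp (- th) * suminf ?f - (1 + c) * (exp (- th1) * suminf ?f1) + c"
      using suminf_pos2[OF sd dnn d0] by simp
    moreover have "(1 + c) * 1 \<le> (1 + c) * (exp (- th1) * suminf ?f1)"
      using S1 th by (intro mult_left_mono) (auto simp: c_def)
    ultimately have "1 < exp (- th) * suminf ?f" by argo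
    then have "exp th < suminf ?f" by (simp add: exp_minus field_simps)
    moreover have "(\<Sum>v. ennreal (?f v)) = ennreal (suminf ?f)"
      by (rule suminf_ennreal2[OF _ s]) (simp add: mu_nonneg)
    ultimately show ?thesis by (simp add: ennreal_less_iff)
  qed
qed

end


context arr begin

lemma choose_params:
  assumes mu0: "0 < mu 0" and ms: "(\<lambda>v. real v * mu v) sums lam" and lam1: "lam < 1" and th: "0 < th"
    and strict: "ennreal (exp th) < (\<Sum>v. ennreal (exp (th * real v) * mu v))"
  shows "\<exists>B th' N0. 1 \<le> B \<and> 0 < th' \<and> th' \<le> th \<and> 1 \<le> (\<Sum>v\<le>B. mu v * exp (th * (real v - 1))) \<and>
        0 \<le> (\<Sum>v\<le>B. mu v * exp (th' * (real v - 1))) \<and>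
        (\<Sum>v\<le>B. mu v * exp (th' * (real v - 1))) ^ N0 \<le> exp (- th) / 2"
proof -
  let ?g = "\<lambda>v. exp (th * real v) * mu v"
  have gnn: "0 \<le> ?g v" for v by (simp add: mu_nonneg)
  obtain B0 where "ennreal (exp th) < (\<Sum>v<B0. ennreal (?g v))"
    using strict unfolding suminf_eq_SUP by (auto simp: less_SUP_iff)
  also have "(\<Sum>v<B0. ennreal (?g v)) = ennreal (\<Sum>v<B0. ?g v)"
    by (rule sum_ennreal) (simp add: mu_nonneg)
  finally have B0: "exp th < (\<Sum>v<B0. ?g v)" by (simp add: ennreal_less_iff)
  have "(\<lambda>n. \<Sum>i<n. mu i) \<longlonglongrightarrow> 1" using mu_sums by (simp add: sums_def)
  then have "eventually (\<lambda>n. lam < (\<Sum>i<n. mu i)) sequentially"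
    using lam1 by (rule order_tendstoD(1))
  then obtain B1 where B1: "\<And>n. n \<ge> B1 \<Longrightarrow> lam < (\<Sum>i<n. mu i)"
    unfolding eventually_sequentially by blast
  define B where "B = max 1 (max B0 B1)"
  have B: "1 \<le> B" "B0 \<le> Suc B" "B1 \<le> Suc B" by (auto simp: B_def)
  have atm: "{..B} = {..<Suc B}" by auto
  have "(\<Sum>v<B0. ?g v) \<le> (\<Sum>v<Suc B. ?g v)"
    by (rule sum_mono2) (use B gnn in auto)
  then have g1: "exp th < (\<Sum>v\<le>B. ?g v)" using B0 atm by simp
  have rho_lam: "lam < (\<Sum>v\<le>B. mu v)" using B1[OF B(3)] atm by simp
  have rho1: "(\<Sum>v\<le>B. mu v) \<le> 1"
    using sum_le_suminf[of mu "{..B}"] mu_sums mu_nonneg by (simp add: sums_iff)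
  have lb: "(\<Sum>v\<le>B. real v * mu v) \<le> lam"
    using sum_le_suminf[of "\<lambda>v. real v * mu v" "{..B}"] ms mu_nonneg by (simp add: sums_iff)
  have phi1: "1 \<le> (\<Sum>v\<le>B. mu v * exp (th * (real v - 1)))"
  proof -
    have "(\<Sum>v\<le>B. mu v * exp (th * (real v - 1))) = (\<Sum>v\<le>B. exp (- th) * ?g v)"
    proof (rule sum.cong[OF refl])
      fix v
      have "exp (th * (real v - 1)) = exp (- th) * exp (th * real v)"
        by (simp add: algebra_simps flip: exp_add)
      then show "mu v * exp (th * (real v - 1)) = exp (- th) * ?g v" by simp
    qed
    also have "\<dots> = exp (- th) * (\<Sum>v\<le>B. ?g v)" by (simp add: sum_distrib_left)
    finally have "(\<Sum>v\<le>B. mu v * exp (th * (real v - 1))) = exp (- th) * (\<Sum>v\<le>B. ?g v)" .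
    moreover have "exp (- th) * exp th < exp (- th) * (\<Sum>v\<le>B. ?g v)"
      using g1 by simp
    ultimately show ?thesis by (simp flip: exp_add)
  qed
  obtain t where t: "0 < t" "t \<le> th" "(\<Sum>v\<le>B. mu v * exp (t * (real v - 1))) < 1"
    using theta_prime[OF mu_nonneg B(1) th _ rho1] rho_lam lb by force
  have pnn: "0 \<le> (\<Sum>v\<le>B. mu v * exp (t * (real v - 1)))" by (intro sum_nonneg) (simp add: mu_nonneg)
  obtain N0 where "(\<Sum>v\<le>B. mu v * exp (t * (real v - 1))) ^ N0 < exp (- th) / 2"
    using real_arch_pow_inv[OF _ t(3), of "exp (- th) / 2"] by auto
  then show ?thesis using B(1) t(1,2) phi1 pnn by (intro exI[of _ B] exI[of _ t] exI[of _ N0]) auto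
qed

lemma pk_bound:
  assumes causal: "\<And>t w j. w \<in> space M \<Longrightarrow> r t w = Some j \<Longrightarrow> j < cum_arr a (Suc t) w"
    and fr: "AE w in M. (\<lambda>N. real (card {q. q < N \<and> delay_ge a r k q w}) / real N) \<longlonglongrightarrow> pk"
    and lam: "(\<integral>\<^sup>+ w. ennreal (real (a 0 w)) \<partial>M) = ennreal lam" "0 \<le> lam" "lam \<le> 1"
    and th: "0 < th'" "th' \<le> th"
    and phi: "1 \<le> (\<Sum>v\<le>B. mu v * exp (th * (real v - 1)))"
    and pnn: "0 \<le> (\<Sum>v\<le>B. mu v * exp (th' * (real v - 1)))"
    and pN: "(\<Sum>v\<le>B. mu v * exp (th' * (real v - 1))) ^ N0 \<le> exp (- th) / 2"
    and k: "1 \<le> k"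
  shows "exp (- th * (real k + real B)) / (24 * real N0 * (real k + 1)) \<le> pk"
proof -
  let ?p = "(\<Sum>v\<le>B. mu v * exp (th' * (real v - 1)))"
  have th0: "0 \<le> th" using th by simp
  have eth: "exp (- th) \<le> 1" using th0 by simp
  have N0: "1 \<le> N0"
  proof (rule ccontr)
    assume "\<not> 1 \<le> N0"
    then have "N0 = 0" by simp
    then have "1 \<le> exp (- th) / 2" using pN by simp
    then show False using eth by simp
  qed
  define n where "n = N0 * (k + 1)"
  have n1: "1 \<le> n" using N0 by (simp add: n_def)
  have kpos: "0 < int k" using k by simp
  have a1: "exp (th * real_of_int 0) \<le> exp (th * real_of_int (int k + int B)) * Pw mu B (int k) n 0 + Uw mu B (int k) th n 0"
    by (rule A1[OF mu_nonneg th0 phi kpos])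
  have a2: "Uw mu B (int k) th n 0 \<le> exp ((th - th') * real_of_int (int k)) * exp (th' * real_of_int 0) * ?p ^ n"
    by (rule A2[OF mu_nonneg _ th(2) kpos]) (use th in simp)
  have "?p ^ n = (?p ^ N0) ^ (k + 1)" unfolding n_def by (rule power_mult)
  also have "\<dots> \<le> (exp (- th) / 2) ^ (k + 1)"
    by (rule power_mono[OF pN]) (simp add: pnn)
  also have "\<dots> = exp (- th * real k) * (exp (- th) / 2 ^ (k + 1))"
    by (simp add: power_divide flip: exp_of_nat_mult)
  also have "\<dots> \<le> exp (- th * real k) * (1 / 2)"
  proof (rule mult_left_mono)
    have "(2::real) \<le> 2 ^ (k + 1)" by (metis power_one_right power_increasing add_gr_0 less_one le_add2 one_le_numeral not_one_less_zero)
    then have "exp (- th) / 2 ^ (k + 1) \<le> 1 / 2 ^ (k + 1)" using eth by (simp add: divide_right_mono)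
    also have "\<dots> \<le> 1 / 2" using \<open>(2::real) \<le> 2 ^ (k + 1)\<close> by (simp add: frac_le)
    finally show "exp (- th) / 2 ^ (k + 1) \<le> 1 / 2" .
  qed simp
  finally have pn: "?p ^ n \<le> exp (- th * real k) / 2" by simp
  have m: "exp ((th - th') * real k) * ?p ^ n \<le> exp ((th - th') * real k) * (exp (- th * real k) / 2)"
    by (rule mult_left_mono[OF pn]) simp
  have "Uw mu B (int k) th n 0 \<le> exp ((th - th') * real k) * ?p ^ n" using a2 by simp
  also note m
  finally have "Uw mu B (int k) th n 0 \<le> exp ((th - th') * real k) * (exp (- th * real k) / 2)" .
  also have "\<dots> = exp (- th' * real k) / 2" by (simp add: algebra_simps flip: exp_add)
  also have "\<dots> \<le> 1 / 2" using th by simp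
  finally have U: "Uw mu B (int k) th n 0 \<le> 1 / 2" .
  define E where "E = exp (th * (real k + real B))"
  have E0: "0 < E" by (simp add: E_def)
  have "1 \<le> E * Pw mu B (int k) n 0 + 1 / 2" using a1 U by (simp add: E_def)
  then have PwE: "1 / (2 * E) \<le> Pw mu B (int k) n 0" using E0 by (simp add: field_simps)
  have "Pw mu B (int k) n 0 / (12 * real n) \<le> pk"
    by (rule p_lower[OF causal fr lam n1])
  moreover have "1 / (2 * E) / (12 * real n) \<le> Pw mu B (int k) n 0 / (12 * real n)"
    using PwE n1 by (intro divide_right_mono) auto
  moreover have "1 / (2 * E) / (12 * real n) = exp (- th * (real k + real B)) / (24 * real N0 * (real k + 1))"
  proof -
    have eE: "exp (- th * (real k + real B)) = 1 / E"
      unfolding E_def by (simp add: exp_minus divide_inverse)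
    show ?thesis unfolding eE using E0 by (simp add: n_def field_simps)
  qed
  ultimately show ?thesis by simp
qed

end


lemma ereal_ln_lt_iff: "ereal_ln x < ereal th \<longleftrightarrow> x < ennreal (exp th)"
proof (cases "x = \<infinity>")
  case True then show ?thesis by (simp add: ereal_ln_def)
next
  case False
  show ?thesis
  proof (cases "x = 0")
    case True then show ?thesis by (simp add: ereal_ln_def)
  next
    case x0: False
    have xr: "x = ennreal (enn2real x)" using False by (simp add: less_top)
    have pos: "0 < enn2real x" using False x0 by (simp add: enn2real_positive_iff less_top zero_less_iff_neq_zero)
    have "ereal_ln x < ereal th \<longleftrightarrow> ln (enn2real x) < th" using False x0 by (simp add: ereal_ln_def)
    also have "\<dots> \<longleftrightarrow> ln (enn2real x) < ln (exp th)" by simp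
    also have "\<dots> \<longleftrightarrow> enn2real x < exp th" using pos by (rule ln_less_cancel_iff) simp
    also have "\<dots> \<longleftrightarrow> x < ennreal (exp th)" using pos by (subst xr) (simp add: ennreal_less_iff)
    finally show ?thesis .
  qed
qed

lemma lim_aux: "0 < c \<Longrightarrow> (\<lambda>k::nat. (th * (real k + real B) + ln (c * (real k + 1))) / real k) \<longlonglongrightarrow> th"
  by real_asymp


theorem theorem6:
  fixes M :: "'w measure"
    and a :: "nat \<Rightarrow> 'w \<Rightarrow> nat"
    and r :: "nat \<Rightarrow> 'w \<Rightarrow> nat option"
    and p :: "nat \<Rightarrow> real"
  assumes "prob_space M"
    and meas: "\<And>t. a t \<in> measurable M (count_space UNIV)"
    and indep: "prob_space.indep_vars M (\<lambda>_. count_space UNIV) a UNIV"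
    and ident: "\<And>t. distr M (count_space UNIV) (a t) = distr M (count_space UNIV) (a 0)"
    and mean: "(\<integral>\<^sup>+ w. ennreal (real (a 0 w)) \<partial>M) < 1"
    and causal: "\<And>t w j. w \<in> space M \<Longrightarrow> r t w = Some j \<Longrightarrow> j < cum_arr a (Suc t) w"
    and frac: "\<And>k. AE w in M.
        (\<lambda>N. real (card {n. n < N \<and> delay_ge a r k n w}) / real N) \<longlonglongrightarrow> p k"
  shows "limsup (\<lambda>k. decay (p k) k) \<le>
           Sup ({0} \<union> {ereal \<theta> | \<theta>. \<theta> > 0 \<and>
                 ereal_ln (\<integral>\<^sup>+ w. ennreal (exp (\<theta> * real (a 0 w))) \<partial>M) < ereal \<theta>})
       \<and> (prob_space.prob M {w \<in> space M. a 0 w > 1} > 0 \<longrightarrow>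
           Sup ({0} \<union> {ereal \<theta> | \<theta>. \<theta> > 0 \<and>
                 ereal_ln (\<integral>\<^sup>+ w. ennreal (exp (\<theta> * real (a 0 w))) \<partial>M) < ereal \<theta>}) < \<infinity>)"
proof -
  interpret arr M a
    by (rule arr.intro[OF assms(1)], rule arr_axioms.intro) (use meas indep ident in auto)
  define Sset where "Sset = ({0} \<union> {ereal \<theta> | \<theta>. \<theta> > 0 \<and>
                 ereal_ln (\<integral>\<^sup>+ w. ennreal (exp (\<theta> * real (a 0 w))) \<partial>M) < ereal \<theta>})"
  define S where "S = Sup Sset"
  have S0: "0 \<le> S" unfolding S_def Sset_def by (rule Sup_upper) simp
  define lam where "lam = enn2real (\<integral>\<^sup>+ w. ennreal (real (a 0 w)) \<partial>M)"
  have lamE: "(\<integral>\<^sup>+ w. ennreal (real (a 0 w)) \<partial>M) = ennreal lam"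
  proof -
    have fin: "(\<integral>\<^sup>+ w. ennreal (real (a 0 w)) \<partial>M) < top" using mean ennreal_one_less_top by (rule less_trans)
    show ?thesis unfolding lam_def using fin by simp
  qed
  have lam0: "0 \<le> lam" by (simp add: lam_def)
  have lam1: "lam < 1" using mean lamE lam0 by (simp add: ennreal_less_iff)
  have ms: "(\<lambda>v. real v * mu v) sums lam" by (rule mean_sums[OF lamE lam0])
  have mu0: "0 < mu 0" by (rule mu0_pos[OF ms lam1])
  have part1: "limsup (\<lambda>k. decay (p k) k) \<le> S"
  proof (cases "S = \<infinity>")
    case True then show ?thesis by simp
  next
    case False
    then obtain s where s: "S = ereal s" using S0 by (cases S) auto
    have s0: "0 \<le> s" using S0 s by simp
    have notin: "ennreal (exp x) \<le> (\<Sum>v. ennreal (exp (x * real v) * mu v))" if x: "s < x" for x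
    proof -
      have "\<not> ereal_ln (\<integral>\<^sup>+ w. ennreal (exp (x * real (a 0 w))) \<partial>M) < ereal x"
      proof
        assume "ereal_ln (\<integral>\<^sup>+ w. ennreal (exp (x * real (a 0 w))) \<partial>M) < ereal x"
        then have "ereal x \<in> Sset" unfolding Sset_def using x s0 by auto
        then have "ereal x \<le> S" unfolding S_def by (rule Sup_upper)
        then show False using x s by simp
      qed
      then have "ennreal (exp x) \<le> (\<integral>\<^sup>+ w. ennreal (exp (x * real (a 0 w))) \<partial>M)"
        by (simp add: ereal_ln_lt_iff not_less)
      also have "\<dots> = (\<Sum>v. ennreal (exp (x * real v) * mu v))"
        by (rule nn_int_series[of "\<lambda>v. exp (x * real v)"]) simp
      finally show ?thesis .
    qed
    show ?thesis unfolding s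
    proof (rule ereal_le_epsilon2)
      fix e :: real assume e: "0 < e"
      define th where "th = s + e"
      define th1 where "th1 = s + e / 2"
      have th1: "0 < th1" "th1 < th" using s0 e by (auto simp: th_def th1_def)
      have th0: "0 < th" using th1 by simp
      have strict: "ennreal (exp th) < (\<Sum>v. ennreal (exp (th * real v) * mu v))"
        by (rule strict_growth[OF mu0 th1 notin]) (simp add: th1_def e)
      obtain B th' N0 where pr: "1 \<le> B" "0 < th'" "th' \<le> th"
          "1 \<le> (\<Sum>v\<le>B. mu v * exp (th * (real v - 1)))"
          "0 \<le> (\<Sum>v\<le>B. mu v * exp (th' * (real v - 1)))"
          "(\<Sum>v\<le>B. mu v * exp (th' * (real v - 1))) ^ N0 \<le> exp (- th) / 2"
        using choose_params[OF mu0 ms lam1 th0 strict] by blast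
      define b where "b k = (th * (real k + real B) + ln (24 * real N0 * (real k + 1))) / real k" for k
      have N0: "1 \<le> N0"
      proof (rule ccontr)
        assume "\<not> 1 \<le> N0"
        then have "N0 = 0" by simp
        then have "1 \<le> exp (- th) / 2" using pr(6) by simp
        moreover have "exp (- th) \<le> 1" using th0 by simp
        ultimately show False by simp
      qed
      have bound: "decay (p k) k \<le> ereal (b k)" if k: "1 \<le> k" for k
      proof -
        let ?L = "exp (- th * (real k + real B)) / (24 * real N0 * (real k + 1))"
        have Lp: "?L \<le> p k"
          by (rule pk_bound[OF causal frac lamE lam0 _ pr(2,3,4,5,6) k]) (simp_all add: less_imp_le[OF lam1])
        have L0: "0 < ?L" using N0 by simp
        have "ln ?L = - th * (real k + real B) - ln (24 * real N0 * (real k + 1))"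
          using N0 by (simp add: ln_div)
        moreover have "ln ?L \<le> ln (p k)" using Lp L0 by simp
        ultimately have "- ln (p k) \<le> th * (real k + real B) + ln (24 * real N0 * (real k + 1))" by simp
        then have "- ln (p k) / real k \<le> b k" unfolding b_def using k by (intro divide_right_mono) auto
        then show ?thesis using Lp L0 by (simp add: decay_def)
      qed
      have "limsup (\<lambda>k. decay (p k) k) \<le> limsup (\<lambda>k. ereal (b k))"
        by (rule Limsup_mono) (use bound in \<open>auto simp: eventually_sequentially\<close>)
      also have "\<dots> = ereal th"
      proof (rule lim_imp_Limsup)
        show "(\<lambda>k. ereal (b k)) \<longlonglongrightarrow> ereal th"
          unfolding b_def using N0 by (intro tendsto_ereal lim_aux) simp
      qed simp
      finally show "limsup (\<lambda>k. decay (p k) k) \<le> ereal s + ereal e" by (simp add: th_def)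
    qed
  qed
  have part2: "S < \<infinity>" if P: "prob {w \<in> space M. a 0 w > 1} > 0"
  proof -
    let ?A = "{w \<in> space M. a 0 w > 1}"
    let ?P = "prob ?A"
    have "S \<le> ereal (max 0 (- ln ?P))"
      unfolding S_def Sset_def
    proof (rule Sup_least)
      fix x assume "x \<in> {0} \<union> {ereal \<theta> | \<theta>. \<theta> > 0 \<and>
                 ereal_ln (\<integral>\<^sup>+ w. ennreal (exp (\<theta> * real (a 0 w))) \<partial>M) < ereal \<theta>}"
      then consider "x = 0" | th where "x = ereal th" "0 < th"
        "ereal_ln (\<integral>\<^sup>+ w. ennreal (exp (th * real (a 0 w))) \<partial>M) < ereal th" by blast
      then show "x \<le> ereal (max 0 (- ln ?P))"
      proof cases
        case 1
        have "ereal 0 \<le> ereal (max 0 (- ln ?P))" by simp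
        then show ?thesis using 1 by (simp only: zero_ereal_def)
      next
        case 2
        have Am: "?A \<in> sets M" by measurable
        have "ennreal (exp (2 * th) * ?P) = ennreal (exp (2 * th)) * emeasure M ?A"
          by (simp add: emeasure_eq_measure ennreal_mult)
        also have "\<dots> = (\<integral>\<^sup>+ w. ennreal (exp (2 * th)) * indicator ?A w \<partial>M)"
          using Am by (simp add: nn_integral_cmult_indicator)
        also have "\<dots> \<le> (\<integral>\<^sup>+ w. ennreal (exp (th * real (a 0 w))) \<partial>M)"
        proof (intro nn_integral_mono)
          fix w
          show "ennreal (exp (2 * th)) * indicator ?A w \<le> ennreal (exp (th * real (a 0 w)))"
          proof (cases "w \<in> ?A")
            case True
            then have "2 \<le> real (a 0 w)" by auto
            then have "2 * th \<le> th * real (a 0 w)" using 2 by (simp add: mult.commute mult_right_mono)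
            then show ?thesis using True by (simp add: ennreal_leI)
          next
            case False then show ?thesis by simp
          qed
        qed
        also have "\<dots> < ennreal (exp th)" using 2(3) by (simp add: ereal_ln_lt_iff)
        finally have "exp (2 * th) * ?P < exp th" by (simp add: ennreal_less_iff)
        moreover have eq2: "exp (2 * th) = exp th * exp th" using exp_add[of th th] by (simp only: mult_2)
        ultimately have "exp th * exp th * ?P < exp th" by (simp only:)
        then have "exp th * (exp th * ?P) < exp th * 1" by (simp only: mult.assoc mult_1_right)
        then have "exp th * ?P < 1" by simp
        then have "?P < 1 / exp th" by (simp add: pos_less_divide_eq mult.commute)
        then have "?P < exp (- th)" by (simp add: exp_minus divide_inverse)
        then have "ln ?P < ln (exp (- th))" using P by (subst ln_less_cancel_iff) auto
        then have "ln ?P < - th" by simp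
        then show ?thesis using 2 by simp
      qed
    qed
    moreover have "ereal c < \<infinity>" for c by simp
    ultimately show ?thesis by (rule le_less_trans)
  qed
  show ?thesis using part1 part2 unfolding S_def Sset_def by blast
qed


end
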